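(* Let $P$ be a finite set of points in the plane in general position (no three collinear) with $|P|$ even, and let $M$ be a pairwise crossing perfect matching on $P$. Then $M$ is a maximum-length perfect matching on $P$, i.e., $w(M)\geqslant w(M')$ for every perfect matching $M'$ on $P$.
   Context: A perfect matching on $P$ is a partition of $P$ into pairs, each pair $\{a,b\}$ regarded as the straight-line segment $ab$. A perfect matching is pairwise crossing if every two of its segments cross each other. For a set $E$ of segments, $w(E)$ is the sum of the Euclidean lengths of its segments. *)

theory Defs
  imports "HOL-Analysis.Analysis"
begin

type_synonym point = "real^2"

definition general_position :: "point set \<Rightarrow> bool" where
  "general_position P \<longleftrightarrow>
     (\<forall>a\<in>P. \<forall>b\<in>P. \<forall>c\<in>P. a \<noteq> b \<and> a \<noteq> c \<and> b \<noteq> c \<longrightarrow> \<not> collinear {a, b, c})"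

definition perfect_matching :: "point set \<Rightarrow> point set set \<Rightarrow> bool" where
  "perfect_matching P M \<longleftrightarrow>
     (\<forall>e\<in>M. card e = 2 \<and> e \<subseteq> P) \<and>
     (\<forall>e\<in>M. \<forall>f\<in>M. e \<noteq> f \<longrightarrow> e \<inter> f = {}) \<and>
     \<Union>M = P"

definition seg_length :: "point set \<Rightarrow> real" where
  "seg_length e = (THE l. \<exists>a b. e = {a, b} \<and> l = dist a b)"

definition crosses :: "point set \<Rightarrow> point set \<Rightarrow> bool" where
  "crosses e f \<longleftrightarrow> (\<exists>a b c d. e = {a, b} \<and> f = {c, d} \<and>
      open_segment a b \<inter> open_segment c d \<noteq> {})"

definition pairwise_crossing :: "point set set \<Rightarrow> bool" where
  "pairwise_crossing M \<longleftrightarrow> (\<forall>e\<in>M. \<forall>f\<in>M. e \<noteq> f \<longrightarrow> crosses e f)"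

definition weight :: "point set set \<Rightarrow> real" where
  "weight E = (\<Sum>e\<in>E. seg_length e)"

end

theory Submission imports Defs begin

lemma int_abs_cos_half:
  "integral {-(pi/2)..pi/2} (\<lambda>s. \<bar>cos s\<bar>) = 2"
proof -
  have "integral {-(pi/2)..pi/2} (\<lambda>s. \<bar>cos s\<bar>) = integral {-(pi/2)..pi/2} cos"
    by (rule integral_cong) (simp add: cos_ge_zero)
  also have "\<dots> = sin (pi/2) - sin (-(pi/2))"
  proof (rule integral_unique, rule fundamental_theorem_of_calculus)
    fix x assume "x \<in> {-(pi/2)..pi/2}"
    show "(sin has_vector_derivative cos x) (at x within {-(pi/2)..pi/2})"
      by (auto intro!: derivative_eq_intros simp: has_real_derivative_iff_has_vector_derivative[symmetric])
  qed simp
  finally show ?thesis by simp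
qed

lemma int_abs_cos_shift:
  assumes "c \<in> {-2*pi..0}"
  shows "integral {c..c+pi} (\<lambda>s. \<bar>cos s\<bar>) = 2"
proof -
  define F where "F u = integral {-3*pi..u} (\<lambda>s. \<bar>cos s\<bar>)" for u
  have cont: "continuous_on {-3*pi..2*pi} (\<lambda>s. \<bar>cos s\<bar>)"
    by (intro continuous_intros)
  have dF: "(F has_real_derivative \<bar>cos u\<bar>) (at u)" if "u \<in> {-3*pi<..<2*pi}" for u
  proof -
    have "(F has_real_derivative \<bar>cos u\<bar>) (at u within {-3*pi..2*pi})"
      unfolding F_def using that by (intro integral_has_real_derivative[OF cont]) auto
    moreover have "u \<in> interior {-3*pi..2*pi}" using that by (simp only: interior_atLeastAtMost_real)
    ultimately show ?thesis by (metis at_within_interior)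
  qed
  have Q: "integral {c..c+pi} (\<lambda>s. \<bar>cos s\<bar>) = F (c+pi) - F c" if "c \<in> {-2*pi..0}" for c
  proof -
    have "integral {-3*pi..c} (\<lambda>s. \<bar>cos s\<bar>) + integral {c..c+pi} (\<lambda>s. \<bar>cos s\<bar>)
          = integral {-3*pi..c+pi} (\<lambda>s. \<bar>cos s\<bar>)"
      apply (rule Henstock_Kurzweil_Integration.integral_combine)
      using that pi_gt_zero apply auto[2]
      by (intro integrable_continuous_real continuous_intros)
    then show ?thesis unfolding F_def by simp
  qed
  have "\<exists>k. \<forall>x\<in>{-2*pi..0}. (\<lambda>c. F (c+pi) - F c) x = k"
  proof (rule has_field_derivative_zero_constant)
    fix x :: real assume x: "x \<in> {-2*pi..0}"
    have x1: "x + pi \<in> {-3*pi<..<2*pi}" "x \<in> {-3*pi<..<2*pi}" using x pi_gt_zero unfolding atLeastAtMost_iff greaterThanLessThan_iff by (intro conjI; linarith)+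
    have d1: "((\<lambda>c. F (c+pi)) has_real_derivative (\<bar>cos (x+pi)\<bar> * 1)) (at x)"
    proof -
      have dg: "((\<lambda>c. c+pi) has_real_derivative 1) (at x)" by (auto intro!: derivative_eq_intros)
      show ?thesis using DERIV_chain2[of F "\<bar>cos (x+pi)\<bar>" "\<lambda>c. c+pi" x 1, OF dF[OF x1(1)] dg] by simp
    qed
    have "((\<lambda>c. F (c+pi) - F c) has_real_derivative (\<bar>cos (x+pi)\<bar> * 1 - \<bar>cos x\<bar>)) (at x)"
      by (rule DERIV_diff[OF d1 dF[OF x1(2)]])
    then show "((\<lambda>c. F (c+pi) - F c) has_real_derivative 0) (at x within {-2*pi..0})"
      by (auto intro: has_field_derivative_at_within)
  qed simp
  then obtain k where k: "\<And>x. x\<in>{-2*pi..0} \<Longrightarrow> F (x+pi) - F x = k" by auto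
  have "-(pi/2) \<in> {-2*pi..0}" using pi_gt_zero by auto
  then have "k = 2" using k[of "-(pi/2)"] Q[of "-(pi/2)"] int_abs_cos_half by simp
  then show ?thesis using Q[OF assms] k[OF assms] by simp
qed


lemma norm2_eq: "norm (x::real^2) = sqrt ((x$1)^2 + (x$2)^2)"
  by (simp add: norm_vec_def L2_set_def sum_2)

lemma int_proj_norm:
  fixes x :: "real^2"
  shows "integral {0..pi} (\<lambda>t. \<bar>x$1 * cos t + x$2 * sin t\<bar>) = 2 * norm x"
proof (cases "x = 0")
  case True then show ?thesis by simp
next
  case False
  define r where "r = norm x"
  have r: "r > 0" using False r_def by simp
  have "(x$1/r)^2 + (x$2/r)^2 = 1"
    using r unfolding r_def norm2_eq by (auto simp: power_divide add_divide_distrib[symmetric])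
  then obtain p where p: "0 \<le> p" "p < 2*pi" "x$1/r = cos p" "x$2/r = sin p"
    by (rule sincos_total_2pi)
  have x1: "x$1 = r * cos p" and x2: "x$2 = r * sin p" using p(3,4) r by (auto simp: field_simps)
  have e: "\<bar>x$1 * cos t + x$2 * sin t\<bar> = r * \<bar>cos (t + (-p))\<bar>" for t
    proof -
    have "x$1 * cos t + x$2 * sin t = r * cos (t + (-p))"
      unfolding x1 x2 by (simp add: cos_diff algebra_simps)
    then show ?thesis using r by (simp add: abs_mult)
  qed
  have "integral {0..pi} (\<lambda>t. \<bar>x$1 * cos t + x$2 * sin t\<bar>)
      = r * integral {0..pi} (\<lambda>t. \<bar>cos (t + (-p))\<bar>)"
    unfolding e by simp
  also have "integral {0..pi} (\<lambda>t. \<bar>cos (t + (-p))\<bar>) = integral {-p..-p+pi} (\<lambda>s. \<bar>cos s\<bar>)"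
  proof -
    have "integral {-p - -p .. (-p+pi) - -p} (\<lambda>x. \<bar>cos (x + -p)\<bar>) = integral {-p..-p+pi} (\<lambda>s. \<bar>cos s\<bar>)"
      by (rule integral_shift_real_ivl)
    moreover have "{-p - -p .. (-p+pi) - -p} = {0..pi}" by simp
    ultimately show ?thesis by simp
  qed
  also have "\<dots> = 2" using p by (intro int_abs_cos_shift) auto
  finally show ?thesis unfolding r_def by simp
qed


definition hh :: "real \<Rightarrow> point \<Rightarrow> real" where
  "hh t p = p$1 * cos t + p$2 * sin t"

definition gg :: "real \<Rightarrow> point set \<Rightarrow> real" where
  "gg t e = Max (hh t ` e) - Min (hh t ` e)"

lemma hh_seg:
  assumes "x \<in> open_segment a b"
  shows "min (hh t a) (hh t b) \<le> hh t x \<and> hh t x \<le> max (hh t a) (hh t b)"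
proof -
  obtain u where u: "0 < u" "u < 1" "x = (1 - u) *\<^sub>R a + u *\<^sub>R b"
    using assms by (auto simp: in_segment)
  have e: "hh t x = hh t a + u * (hh t b - hh t a)"
    unfolding u(3) hh_def by (simp add: algebra_simps)
  show ?thesis
  proof (cases "hh t a \<le> hh t b")
    case True
    have "0 \<le> u * (hh t b - hh t a)" using True u by simp
    moreover have "u * (hh t b - hh t a) \<le> (hh t b - hh t a)"
      using mult_right_mono[of u 1 "hh t b - hh t a"] True u by simp
    ultimately have "hh t a \<le> hh t x" "hh t x \<le> hh t b" using e by linarith+
    then show ?thesis using True by (simp add: min_def max_def)
  next
    case False
    have "u * (hh t b - hh t a) \<le> 0" using False u by (simp add: mult_nonneg_nonpos)
    moreover have "(hh t b - hh t a) \<le> u * (hh t b - hh t a)"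
      using mult_right_mono_neg[of u 1 "hh t b - hh t a"] False u by simp
    ultimately have "hh t b \<le> hh t x" "hh t x \<le> hh t a" using e by linarith+
    then show ?thesis using False by (simp add: min_def max_def)
  qed
qed

lemma gg_pair: "gg t {a, b} = \<bar>hh t a - hh t b\<bar>"
  by (simp add: gg_def)

lemma pm_edge:
  assumes "perfect_matching P E" "e \<in> E"
  obtains a b where "a \<noteq> b" "e = {a, b}" "a \<in> P" "b \<in> P"
proof -
  have "card e = 2" "e \<subseteq> P" using assms unfolding perfect_matching_def by auto
  then obtain a b where "e = {a,b}" "a \<noteq> b" by (auto simp: card_2_iff)
  then show ?thesis using that \<open>e \<subseteq> P\<close> by auto
qed

lemma pm_finite:
  assumes "finite P" "perfect_matching P E"
  shows "finite E"
proof -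
  have "E \<subseteq> Pow P" using assms(2) unfolding perfect_matching_def by auto
  then show ?thesis using assms(1) finite_subset by blast
qed

lemma pm_sum:
  assumes "finite P" "perfect_matching P E"
  shows "(\<Sum>e\<in>E. \<Sum>p\<in>e. f p) = (\<Sum>p\<in>P. f p)"
proof -
  have fe: "\<forall>e\<in>E. finite e" using assms(2) unfolding perfect_matching_def
    by (auto intro: card_ge_0_finite)
  have dj: "\<forall>A\<in>E. \<forall>B\<in>E. A \<noteq> B \<longrightarrow> A \<inter> B = {}" using assms(2) unfolding perfect_matching_def by blast
  have "(\<Sum>p\<in>\<Union>E. f p) = (\<Sum>e\<in>E. \<Sum>p\<in>e. f p)"
    using sum.Union_disjoint[OF fe dj] by (simp add: o_def)
  moreover have "\<Union>E = P" using assms(2) unfolding perfect_matching_def by blast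
  ultimately show ?thesis by simp
qed

lemma key:
  assumes "finite P" "perfect_matching P M" "perfect_matching P M'" "pairwise_crossing M"
  shows "(\<Sum>e\<in>M'. gg t e) \<le> (\<Sum>e\<in>M. gg t e)"
proof (cases "M = {}")
  case True
  then have P0: "P = {}" using assms(2) unfolding perfect_matching_def by auto
  have "M' = {}"
  proof (rule ccontr)
    assume "M' \<noteq> {}"
    then obtain e where "e \<in> M'" by blast
    then obtain a b where "a \<in> P" using pm_edge[OF assms(3)] by metis
    then show False using \<open>P = {}\<close> by simp
  qed
  then show ?thesis using True by simp
next
  case False
  have fM: "finite M" using pm_finite assms by blast
  define c where "c = Max ((\<lambda>e. Min (hh t ` e)) ` M)"
  have lo: "Min (hh t ` e) \<le> c" if "e \<in> M" for e
    unfolding c_def using fM that by (intro Max_ge) auto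
  have hi: "c \<le> Max (hh t ` e)" if eM: "e \<in> M" for e
  proof -
    have "c \<in> (\<lambda>e. Min (hh t ` e)) ` M" unfolding c_def using fM False by (intro Max_in) auto
    then obtain f where f: "f \<in> M" "c = Min (hh t ` f)" by blast
    show ?thesis
    proof (cases "f = e")
      case True
      obtain a b where ab: "a \<noteq> b" "e = {a,b}" using pm_edge[OF assms(2) eM] by metis
      show ?thesis using f True ab by simp
    next
      case ne: False
      then have "crosses e f" using assms(4) eM f(1) unfolding pairwise_crossing_def by metis
      then obtain a b a' b' x where ab: "e = {a,b}" "f = {a',b'}" "x \<in> open_segment a b" "x \<in> open_segment a' b'"
        unfolding crosses_def by blast
      have "hh t x \<le> max (hh t a) (hh t b)" using hh_seg[OF ab(3)] by blast
      moreover have "min (hh t a') (hh t b') \<le> hh t x" using hh_seg[OF ab(4)] by blast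
      ultimately show ?thesis using f ab by simp
    qed
  qed
  have eqM: "gg t e = (\<Sum>p\<in>e. \<bar>hh t p - c\<bar>)" if eM: "e \<in> M" for e
  proof -
    obtain a b where ab: "a \<noteq> b" "e = {a,b}" using pm_edge[OF assms(2) eM] by metis
    have "min (hh t a) (hh t b) \<le> c" "c \<le> max (hh t a) (hh t b)" using lo[OF eM] hi[OF eM] ab by auto
    then show ?thesis using ab by (simp add: gg_pair)
  qed
  have leM': "gg t e \<le> (\<Sum>p\<in>e. \<bar>hh t p - c\<bar>)" if eM: "e \<in> M'" for e
  proof -
    obtain a b where ab: "a \<noteq> b" "e = {a,b}" using pm_edge[OF assms(3) eM] by metis
    then show ?thesis by (simp add: gg_pair)
  qed
  have "(\<Sum>e\<in>M'. gg t e) \<le> (\<Sum>e\<in>M'. \<Sum>p\<in>e. \<bar>hh t p - c\<bar>)"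
    by (rule sum_mono) (rule leM')
  also have "\<dots> = (\<Sum>p\<in>P. \<bar>hh t p - c\<bar>)" by (rule pm_sum[OF assms(1,3)])
  also have "\<dots> = (\<Sum>e\<in>M. \<Sum>p\<in>e. \<bar>hh t p - c\<bar>)" by (rule pm_sum[OF assms(1,2), symmetric])
  also have "\<dots> = (\<Sum>e\<in>M. gg t e)" by (rule sum.cong) (auto simp: eqM)
  finally show ?thesis .
qed

lemma seg_len: "seg_length {a,b} = dist a b"
  unfolding seg_length_def
  by (rule the_equality) (auto simp: doubleton_eq_iff dist_commute)

lemma hh_diff: "hh t a - hh t b = (a - b)$1 * cos t + (a - b)$2 * sin t"
  by (simp add: hh_def algebra_simps)

lemma seg_int: "seg_length {a,b} = integral {0..pi} (\<lambda>t. gg t {a,b}) / 2"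
proof -
  have "integral {0..pi} (\<lambda>t. gg t {a,b}) = integral {0..pi} (\<lambda>t. \<bar>(a-b)$1 * cos t + (a-b)$2 * sin t\<bar>)"
    by (simp only: gg_pair hh_diff)
  also have "\<dots> = 2 * norm (a - b)" by (rule int_proj_norm)
  finally show ?thesis by (simp add: seg_len dist_norm)
qed

lemma gg_integrable: "(\<lambda>t. gg t {a,b}) integrable_on {0..pi}"
  unfolding gg_pair hh_def by (intro integrable_continuous_real continuous_intros)

lemma gg_integrable_pm:
  assumes "perfect_matching P E" "e \<in> E"
  shows "(\<lambda>t. gg t e) integrable_on {0..pi}"
proof -
  obtain a b where "e = {a,b}" using pm_edge[OF assms] by metis
  then show ?thesis using gg_integrable by simp
qed

lemma weight_int:
  assumes "finite P" "perfect_matching P E"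
  shows "weight E = integral {0..pi} (\<lambda>t. \<Sum>e\<in>E. gg t e) / 2"
proof -
  have fE: "finite E" using pm_finite[OF assms] .
  have "weight E = (\<Sum>e\<in>E. integral {0..pi} (\<lambda>t. gg t e) / 2)"
    unfolding weight_def
  proof (rule sum.cong)
    fix e assume "e \<in> E"
    then obtain a b where "e = {a,b}" using pm_edge[OF assms(2)] by metis
    then show "seg_length e = integral {0..pi} (\<lambda>t. gg t e) / 2" by (simp add: seg_int)
  qed simp
  also have "\<dots> = (\<Sum>e\<in>E. integral {0..pi} (\<lambda>t. gg t e)) / 2"
    by (simp add: sum_divide_distrib)
  also have "(\<Sum>e\<in>E. integral {0..pi} (\<lambda>t. gg t e)) = integral {0..pi} (\<lambda>t. \<Sum>e\<in>E. gg t e)"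
    by (rule integral_sum[symmetric]) (use fE gg_integrable_pm[OF assms(2)] in auto)
  finally show ?thesis .
qed


theorem theorem10:
  fixes P :: "point set" and M :: "point set set"
  assumes "finite P" and "general_position P" and "even (card P)"
    and "perfect_matching P M" and "pairwise_crossing M"
  shows "\<forall>M'. perfect_matching P M' \<longrightarrow> weight M' \<le> weight M"
proof (intro allI impI)
  fix M' assume pm': "perfect_matching P M'"
  have fM: "finite M" "finite M'" using pm_finite assms(1,4) pm' by blast+
  have "integral {0..pi} (\<lambda>t. \<Sum>e\<in>M'. gg t e) \<le> integral {0..pi} (\<lambda>t. \<Sum>e\<in>M. gg t e)"
  proof (rule integral_le)
    show "(\<lambda>t. \<Sum>e\<in>M'. gg t e) integrable_on {0..pi}"
      using fM(2) gg_integrable_pm[OF pm'] by (intro integrable_sum) auto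
    show "(\<lambda>t. \<Sum>e\<in>M. gg t e) integrable_on {0..pi}"
      using fM(1) gg_integrable_pm[OF assms(4)] by (intro integrable_sum) auto
    fix t show "(\<Sum>e\<in>M'. gg t e) \<le> (\<Sum>e\<in>M. gg t e)"
      by (rule key[OF assms(1,4) pm' assms(5)])
  qed
  then show "weight M' \<le> weight M"
    using weight_int[OF assms(1) pm'] weight_int[OF assms(1,4)] by simp
qed

end
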